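(* Let $\Delta\vdash t$ be a closed nominal term-in-context and $\hat t=\mathcal{T}(\Delta,t)$. If $\pi_1\cdot X$ and $\pi_2\cdot X$ are two occurrences of the same variable $X$ in $t$ and $X(\overline{xs_1})$, $X(\overline{xs_2})$ are their respective translations in $\hat t$, then $\pi_1^{-1}\cdot\overline{xs_1}=\pi_2^{-1}\cdot\overline{xs_2}$ (as lists, with permutations applied elementwise).
   Context: Nominal terms: $s,t ::= a \mid \pi\cdot X \mid [a]s \mid f\,s \mid (s_1,\ldots,s_n)$ over atoms, variables, function symbols and finite-support permutations $\pi$ of atoms. A freshness context $\Delta$ is a set of constraints $a\#X$. $\Delta\vdash t$ is closed if: (1) every atom occurrence $a$ in $t$ lies under an abstraction $[a]$; (2) if $\pi\cdot X$ is in the scope of an abstraction of $\pi(a)$ then every occurrence $\pi'\cdot X$ of $X$ in $t$ is in the scope of an abstraction of $\pi'(a)$, or $a\#X\in\Delta$; (3) for two occurrences $\pi_1\cdot X,\pi_2\cdot X$ and $a$ with $\pi_1(a)\neq\pi_2(a)$, if $a$ is not abstracted in one of the occurrences then $a\#X\in\Delta$. Translation: $\Lambda_t(X)$ is the set of atoms $a$ such that some occurrence of $X$ in $t$ is in the scope of $[a]$. With a fixed total order on atoms, $\mathcal{T}(\Delta,t)$ is the CRS meta-term obtained from $t$ by replacing each occurrence $\pi\cdot X$ by $X(\overline{xs})$ with $\overline{xs}=\pi\cdot xs$, where $xs$ is the ascending list of $\{\pi^{-1}(a)\mid a\in\Lambda_t(X)\}\setminus\{a\mid a\#X\in\Delta\}$;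 other constructs are kept unchanged. *)

theory Defs
  imports "HOL-Combinatorics.Perm"
begin

(* Atoms are natural numbers; the fixed total order on atoms is the usual order on nat.
   Permutations are finite-support permutations ('a perm from HOL-Combinatorics). *)
type_synonym atom = nat

datatype ('f, 'v) nterm =
    NAtom atom
  | NSusp "atom perm" 'v
  | NAbs atom "('f, 'v) nterm"
  | NFn 'f "('f, 'v) nterm"
  | NTup "('f, 'v) nterm list"

(* CRS meta-terms produced by the translation *)
datatype ('f, 'v) mterm =
    MAtom atom
  | MVar 'v "atom list"
  | MAbs atom "('f, 'v) mterm"
  | MFn 'f "('f, 'v) mterm"
  | MTup "('f, 'v) mterm list"

(* Occurrences of variables: (position, permutation, variable, atoms abstracted above it) *)
primrec var_occs :: "('f, 'v) nterm \<Rightarrow> (nat list \<times> atom perm \<times> 'v \<times> atom set) set"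
  and var_occs_list :: "nat \<Rightarrow> ('f, 'v) nterm list \<Rightarrow> (nat list \<times> atom perm \<times> 'v \<times> atom set) set"
where
  "var_occs (NAtom a) = {}"
| "var_occs (NSusp \<pi> X) = {([], \<pi>, X, {})}"
| "var_occs (NAbs a s) = (\<lambda>(p, \<pi>, X, B). (0 # p, \<pi>, X, insert a B)) ` var_occs s"
| "var_occs (NFn f s) = (\<lambda>(p, \<pi>, X, B). (0 # p, \<pi>, X, B)) ` var_occs s"
| "var_occs (NTup ts) = var_occs_list 0 ts"
| "var_occs_list i [] = {}"
| "var_occs_list i (s # ss) =
     (\<lambda>(p, \<pi>, X, B). (i # p, \<pi>, X, B)) ` var_occs s \<union> var_occs_list (Suc i) ss"

(* Occurrences of atoms: (position, atom, atoms abstracted above it) *)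
primrec atom_occs :: "('f, 'v) nterm \<Rightarrow> (nat list \<times> atom \<times> atom set) set"
  and atom_occs_list :: "nat \<Rightarrow> ('f, 'v) nterm list \<Rightarrow> (nat list \<times> atom \<times> atom set) set"
where
  "atom_occs (NAtom a) = {([], a, {})}"
| "atom_occs (NSusp \<pi> X) = {}"
| "atom_occs (NAbs a s) = (\<lambda>(p, b, B). (0 # p, b, insert a B)) ` atom_occs s"
| "atom_occs (NFn f s) = (\<lambda>(p, b, B). (0 # p, b, B)) ` atom_occs s"
| "atom_occs (NTup ts) = atom_occs_list 0 ts"
| "atom_occs_list i [] = {}"
| "atom_occs_list i (s # ss) =
     (\<lambda>(p, b, B). (i # p, b, B)) ` atom_occs s \<union> atom_occs_list (Suc i) ss"

primrec mvar_occs :: "('f, 'v) mterm \<Rightarrow> (nat list \<times> 'v \<times> atom list) set"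
  and mvar_occs_list :: "nat \<Rightarrow> ('f, 'v) mterm list \<Rightarrow> (nat list \<times> 'v \<times> atom list) set"
where
  "mvar_occs (MAtom a) = {}"
| "mvar_occs (MVar X xs) = {([], X, xs)}"
| "mvar_occs (MAbs a s) = (\<lambda>(p, X, xs). (0 # p, X, xs)) ` mvar_occs s"
| "mvar_occs (MFn f s) = (\<lambda>(p, X, xs). (0 # p, X, xs)) ` mvar_occs s"
| "mvar_occs (MTup ts) = mvar_occs_list 0 ts"
| "mvar_occs_list i [] = {}"
| "mvar_occs_list i (s # ss) =
     (\<lambda>(p, X, xs). (i # p, X, xs)) ` mvar_occs s \<union> mvar_occs_list (Suc i) ss"

(* A freshness context: the pair (a, X) stands for the constraint a # X *)
type_synonym 'v fctx = "(atom \<times> 'v) set"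

definition closed_nterm :: "'v fctx \<Rightarrow> ('f, 'v) nterm \<Rightarrow> bool" where
  "closed_nterm \<Delta> t \<longleftrightarrow>
     \<comment> \<open>(1) every atom occurrence a lies under an abstraction [a]\<close>
     (\<forall>(p, a, B) \<in> atom_occs t. a \<in> B) \<and>
     \<comment> \<open>(2)\<close>
     (\<forall>(p, \<pi>, X, B) \<in> var_occs t. \<forall>a. Perm.apply (\<pi>) a \<in> B \<longrightarrow>
        (\<forall>(p', \<pi>', X', B') \<in> var_occs t. X' = X \<longrightarrow> Perm.apply (\<pi>') a \<in> B') \<or> (a, X) \<in> \<Delta>) \<and>
     \<comment> \<open>(3)\<close>
     (\<forall>(p1, \<pi>1, X1, B1) \<in> var_occs t. \<forall>(p2, \<pi>2, X2, B2) \<in> var_occs t. \<forall>a.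
        X1 = X2 \<and> Perm.apply (\<pi>1) a \<noteq> Perm.apply (\<pi>2) a \<and> (Perm.apply (\<pi>1) a \<notin> B1 \<or> Perm.apply (\<pi>2) a \<notin> B2)
          \<longrightarrow> (a, X1) \<in> \<Delta>)"

definition Lam :: "('f, 'v) nterm \<Rightarrow> 'v \<Rightarrow> atom set" where
  "Lam t X = {a. \<exists>p \<pi> B. (p, \<pi>, X, B) \<in> var_occs t \<and> a \<in> B}"

(* the translation T(Delta, t); t0 is the whole term (used for Lambda), the second
   argument is the subterm currently being translated *)
primrec trans_aux :: "'v fctx \<Rightarrow> ('f, 'v) nterm \<Rightarrow> ('f, 'v) nterm \<Rightarrow> ('f, 'v) mterm"
  and trans_aux_list :: "'v fctx \<Rightarrow> ('f, 'v) nterm \<Rightarrow> ('f, 'v) nterm list \<Rightarrow> ('f, 'v) mterm list"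
where
  "trans_aux \<Delta> t0 (NAtom a) = MAtom a"
| "trans_aux \<Delta> t0 (NSusp \<pi> X) =
     MVar X (map (\<lambda>a. Perm.apply (\<pi>) a)
       (sorted_list_of_set ((\<lambda>a. Perm.apply (inverse \<pi>) a) ` Lam t0 X - {a. (a, X) \<in> \<Delta>})))"
| "trans_aux \<Delta> t0 (NAbs a s) = MAbs a (trans_aux \<Delta> t0 s)"
| "trans_aux \<Delta> t0 (NFn f s) = MFn f (trans_aux \<Delta> t0 s)"
| "trans_aux \<Delta> t0 (NTup ts) = MTup (trans_aux_list \<Delta> t0 ts)"
| "trans_aux_list \<Delta> t0 [] = []"
| "trans_aux_list \<Delta> t0 (s # ss) = trans_aux \<Delta> t0 s # trans_aux_list \<Delta> t0 ss"

definition translate :: "'v fctx \<Rightarrow> ('f, 'v) nterm \<Rightarrow> ('f, 'v) mterm" where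
  "translate \<Delta> t = trans_aux \<Delta> t t"

end

theory Submission
  imports Defs
begin

lemma inv_apply1: "Perm.apply (inverse \<pi>) (Perm.apply \<pi> a) = a"
  by (simp add: apply_inverse bij_is_inj)

lemma inv_apply2: "Perm.apply \<pi> (Perm.apply (inverse \<pi>) a) = a"
  by (simp add: apply_inverse bij_is_surj surj_f_inv_f)

lemma vo_list_hd: "(p, r) \<in> var_occs_list i ss \<Longrightarrow> p \<noteq> [] \<and> hd p \<ge> i"
  by (induction ss arbitrary: i) (auto, fastforce+)

lemma mo_list_hd: "(p, r) \<in> mvar_occs_list i ss \<Longrightarrow> p \<noteq> [] \<and> hd p \<ge> i"
  by (induction ss arbitrary: i) (auto, fastforce+)

lemma key:
  "(p, X, xs) \<in> mvar_occs (trans_aux \<Delta> t0 s) \<Longrightarrow> (p, \<pi>, X, B) \<in> var_occs s \<Longrightarrow>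
     xs = map (\<lambda>a. Perm.apply (\<pi>) a)
       (sorted_list_of_set ((\<lambda>a. Perm.apply (inverse \<pi>) a) ` Lam t0 X - {a. (a, X) \<in> \<Delta>}))"
proof (induction s arbitrary: p xs \<pi> B)
  case (NTup ts)
  have "\<And>i p xs \<pi> B. (p, X, xs) \<in> mvar_occs_list i (trans_aux_list \<Delta> t0 ts) \<Longrightarrow> (p, \<pi>, X, B) \<in> var_occs_list i ts \<Longrightarrow>
     xs = map (\<lambda>a. Perm.apply (\<pi>) a)
       (sorted_list_of_set ((\<lambda>a. Perm.apply (inverse \<pi>) a) ` Lam t0 X - {a. (a, X) \<in> \<Delta>}))"
    using NTup.IH
  proof (induction ts)
    case (Cons s ss)
    show ?case using Cons.prems(1,2)
    proof (auto, goal_cases)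
      case 1 thus ?case using Cons.prems(3) by force
    next
      case (2 q) thus ?case using vo_list_hd[of "i # q" _ "Suc i" ss] by force
    next
      case (3 q) thus ?case using mo_list_hd[of "i # q" _ "Suc i"] by force
    next
      case 4
      have h: "\<And>xa p xs \<pi> B. xa \<in> set ss \<Longrightarrow> (p, X, xs) \<in> mvar_occs (trans_aux \<Delta> t0 xa) \<Longrightarrow>
          (p, \<pi>, X, B) \<in> var_occs xa \<Longrightarrow> xs = map (apply \<pi>)
              (sorted_list_of_set (apply (inverse \<pi>) ` Lam t0 X - {a. (a, X) \<in> \<Delta>}))"
        using Cons.prems(3) by (metis list.set_intros(2))
      show ?case by (rule Cons.IH[OF 4(1) 4(2) h]) auto
    qed
  qed auto
  from this[of p xs 0 \<pi> B] NTup.prems show ?case by simp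
next
  case (NAbs a s)
  from NAbs.prems have "\<exists>q. p = 0 # q \<and> (q, X, xs) \<in> mvar_occs (trans_aux \<Delta> t0 s)" by auto
  then obtain q where q: "p = 0 # q" "(q, X, xs) \<in> mvar_occs (trans_aux \<Delta> t0 s)" by blast
  from NAbs.prems(2) q(1) obtain B' where "(q, \<pi>, X, B') \<in> var_occs s" by auto
  from NAbs.IH[OF q(2) this] show ?case .
next
  case (NFn f s)
  from NFn.prems have "\<exists>q. p = 0 # q \<and> (q, X, xs) \<in> mvar_occs (trans_aux \<Delta> t0 s)" by auto
  then obtain q where q: "p = 0 # q" "(q, X, xs) \<in> mvar_occs (trans_aux \<Delta> t0 s)" by blast
  from NFn.prems(2) q(1) obtain B' where "(q, \<pi>, X, B') \<in> var_occs s" by auto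
  from NFn.IH[OF q(2) this] show ?case .
qed auto

theorem mainTheorem7:
  fixes \<Delta> :: "'v fctx" and t :: "('f, 'v) nterm"
  assumes "finite \<Delta>"
    and "closed_nterm \<Delta> t"
    and "(p1, \<pi>1, X, B1) \<in> var_occs t"
    and "(p2, \<pi>2, X, B2) \<in> var_occs t"
    and "(p1, X, xs1) \<in> mvar_occs (translate \<Delta> t)"
    and "(p2, X, xs2) \<in> mvar_occs (translate \<Delta> t)"
  shows "map (\<lambda>a. Perm.apply (inverse \<pi>1) a) xs1 = map (\<lambda>a. Perm.apply (inverse \<pi>2) a) xs2"
proof -
  let ?S = "\<lambda>\<pi>. (\<lambda>a. Perm.apply (inverse \<pi>) a) ` Lam t X - {a. (a, X) \<in> \<Delta>}"
  have x1: "xs1 = map (\<lambda>a. Perm.apply \<pi>1 a) (sorted_list_of_set (?S \<pi>1))"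
    using key[OF assms(5)[unfolded translate_def] assms(3)] .
  have x2: "xs2 = map (\<lambda>a. Perm.apply \<pi>2 a) (sorted_list_of_set (?S \<pi>2))"
    using key[OF assms(6)[unfolded translate_def] assms(4)] .
  have c3: "\<And>a. a \<notin> {a. (a, X) \<in> \<Delta>} \<Longrightarrow> Perm.apply \<pi>1 a = Perm.apply \<pi>2 a \<or>
     (Perm.apply \<pi>1 a \<in> B1 \<and> Perm.apply \<pi>2 a \<in> B2)"
  proof -
    fix a assume na: "a \<notin> {a. (a, X) \<in> \<Delta>}"
    have C: "\<forall>(p1, \<pi>1, X1, B1) \<in> var_occs t. \<forall>(p2, \<pi>2, X2, B2) \<in> var_occs t. \<forall>a.
        X1 = X2 \<and> Perm.apply (\<pi>1) a \<noteq> Perm.apply (\<pi>2) a \<and> (Perm.apply (\<pi>1) a \<notin> B1 \<or> Perm.apply (\<pi>2) a \<notin> B2)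
          \<longrightarrow> (a, X1) \<in> \<Delta>" using assms(2)[unfolded closed_nterm_def, THEN conjunct2, THEN conjunct2] .
    have "X = X \<and> Perm.apply (\<pi>1) a \<noteq> Perm.apply (\<pi>2) a \<and> (Perm.apply (\<pi>1) a \<notin> B1 \<or> Perm.apply (\<pi>2) a \<notin> B2)
          \<longrightarrow> (a, X) \<in> \<Delta>"
      using bspec[OF bspec[OF C assms(3), simplified] assms(4)] by simp
    thus "Perm.apply \<pi>1 a = Perm.apply \<pi>2 a \<or>
     (Perm.apply \<pi>1 a \<in> B1 \<and> Perm.apply \<pi>2 a \<in> B2)" using na by blast
  qed
  have "\<And>\<pi> a. (a \<in> (\<lambda>a. Perm.apply (inverse \<pi>) a) ` L) = (Perm.apply \<pi> a \<in> L)" for L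
    proof
    fix \<pi> a assume "a \<in> (\<lambda>a. Perm.apply (inverse \<pi>) a) ` L"
    then obtain b where "b \<in> L" "a = Perm.apply (inverse \<pi>) b" by blast
    thus "Perm.apply \<pi> a \<in> L" by (simp add: inv_apply2)
  next
    fix \<pi> a assume "Perm.apply \<pi> a \<in> L"
    thus "a \<in> (\<lambda>a. Perm.apply (inverse \<pi>) a) ` L" by (rule image_eqI[rotated]) (simp add: inv_apply1)
  qed
  note imI = this
  have eq: "\<And>\<pi>. ?S \<pi> = {a. Perm.apply \<pi> a \<in> Lam t X} - {a. (a, X) \<in> \<Delta>}"
    by (rule set_eqI) (simp only: Diff_iff mem_Collect_eq imI)
  have "?S \<pi>1 = ?S \<pi>2"
    unfolding eq
  proof (rule set_eqI, rule iffI)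
    fix a assume a: "a \<in> {a. Perm.apply \<pi>1 a \<in> Lam t X} - {a. (a, X) \<in> \<Delta>}"
    then have na: "(a, X) \<notin> \<Delta>" and "Perm.apply \<pi>1 a \<in> Lam t X" by auto
    then obtain p \<sigma> B where "(p, \<sigma>, X, B) \<in> var_occs t" "Perm.apply \<pi>1 a \<in> B" unfolding Lam_def by blast
    have "Perm.apply \<pi>1 a = Perm.apply \<pi>2 a \<or> (Perm.apply \<pi>1 a \<in> B1 \<and> Perm.apply \<pi>2 a \<in> B2)"
      using c3[of a] na by simp
    then have "Perm.apply \<pi>2 a \<in> Lam t X"
    proof
      assume "Perm.apply \<pi>1 a = Perm.apply \<pi>2 a"
      thus ?thesis using \<open>Perm.apply \<pi>1 a \<in> Lam t X\<close> by simp
    next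
      assume "Perm.apply \<pi>1 a \<in> B1 \<and> Perm.apply \<pi>2 a \<in> B2"
      thus ?thesis using assms(3,4) unfolding Lam_def by blast
    qed
    thus "a \<in> {a. Perm.apply \<pi>2 a \<in> Lam t X} - {a. (a, X) \<in> \<Delta>}" using a by blast
  next
    fix a assume a: "a \<in> {a. Perm.apply \<pi>2 a \<in> Lam t X} - {a. (a, X) \<in> \<Delta>}"
    then have na: "(a, X) \<notin> \<Delta>" and "Perm.apply \<pi>2 a \<in> Lam t X" by auto
    then obtain p \<sigma> B where "(p, \<sigma>, X, B) \<in> var_occs t" "Perm.apply \<pi>2 a \<in> B" unfolding Lam_def by blast
    have "Perm.apply \<pi>1 a = Perm.apply \<pi>2 a \<or> (Perm.apply \<pi>1 a \<in> B1 \<and> Perm.apply \<pi>2 a \<in> B2)"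
      using c3[of a] na by simp
    then have "Perm.apply \<pi>1 a \<in> Lam t X"
    proof
      assume "Perm.apply \<pi>1 a = Perm.apply \<pi>2 a"
      thus ?thesis using \<open>Perm.apply \<pi>2 a \<in> Lam t X\<close> by simp
    next
      assume "Perm.apply \<pi>1 a \<in> B1 \<and> Perm.apply \<pi>2 a \<in> B2"
      thus ?thesis using assms(3,4) unfolding Lam_def by blast
    qed
    thus "a \<in> {a. Perm.apply \<pi>1 a \<in> Lam t X} - {a. (a, X) \<in> \<Delta>}" using a by blast
  qed
  moreover have "\<And>\<pi> l. map (\<lambda>a. Perm.apply (inverse \<pi>) a) (map (\<lambda>a. Perm.apply \<pi> a) l) = l"
    by (induct_tac l) (simp_all add: inv_apply1)
  ultimately show ?thesis using x1 x2 by (simp add: inv_apply1)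
qed

end
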